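(* Let $\mathcal C$ be the class of structures $\mathbb X=\langle X,\rho\rangle$ with $|X|=\omega$ and $\rho$ an equivalence relation on $X$ such that (C1) infinitely many $\rho$-classes are singletons, and (C2) for each $n\in\omega$ there is a $\rho$-class of size $\ge n$. Let $\mathcal C_{\mathrm{fin}}$ be the set of $\mathbb X\in\mathcal C$ all of whose classes are finite, and $\mathcal C_\omega=\mathcal C\setminus\mathcal C_{\mathrm{fin}}$. Then for all $\mathbb X,\mathbb Y\in\mathcal C$: (a) $\mathbb X\equiv_{\mathcal P}\mathbb Y$; (b) $\mathbb X\preccurlyeq_c\mathbb Y$ iff $\mathbb X\in\mathcal C_{\mathrm{fin}}$ or $\mathbb Y\in\mathcal C_\omega$; (c) $\mathbb X\sim_c\mathbb Y$ iff either both $\mathbb X,\mathbb Y\in\mathcal C_{\mathrm{fin}}$ or both $\mathbb X,\mathbb Y\in\mathcal C_\omega$.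
   Context: The language has one binary relation symbol $R$. A condensation from $\langle X,\rho\rangle$ onto $\langle Y,\sigma\rangle$ is a bijection $F:X\to Y$ with $x\,\rho\,x'\Rightarrow F(x)\,\sigma\,F(x')$; $\mathbb X\preccurlyeq_c\mathbb Y$ means a condensation exists, and $\mathbb X\sim_c\mathbb Y$ means $\mathbb X\preccurlyeq_c\mathbb Y$ and $\mathbb Y\preccurlyeq_c\mathbb X$. $\mathcal P_0$ consists of all atomic formulas ($v_\alpha=v_\beta$, $R(v_\alpha,v_\beta)$) and all $\neg\,v_\alpha=v_\beta$; $\mathcal P$ is the closure of $\mathcal P_0$ under finite conjunctions, finite disjunctions, $\forall v$ and $\exists v$ (no negation). $\mathbb X\equiv_{\mathcal P}\mathbb Y$ means $\mathbb X$ and $\mathbb Y$ satisfy the same sentences of $\mathcal P$. *)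

theory Defs
  imports Main "HOL-Library.Countable_Set"
begin

text \<open>Formulas of the positive fragment P: built from v_i = v_j, R(v_i,v_j), not v_i = v_j
  by binary conjunction, binary disjunction, forall and exists.\<close>
datatype pform =
    PEq nat nat
  | PRel nat nat
  | PNeq nat nat
  | PConj pform pform
  | PDisj pform pform
  | PAll nat pform
  | PEx nat pform

fun fvars :: "pform \<Rightarrow> nat set" where
  "fvars (PEq i j) = {i, j}"
| "fvars (PRel i j) = {i, j}"
| "fvars (PNeq i j) = {i, j}"
| "fvars (PConj p q) = fvars p \<union> fvars q"
| "fvars (PDisj p q) = fvars p \<union> fvars q"
| "fvars (PAll i p) = fvars p - {i}"
| "fvars (PEx i p) = fvars p - {i}"

definition psentence :: "pform \<Rightarrow> bool" where
  "psentence p \<longleftrightarrow> fvars p = {}"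

fun psat :: "'a set \<Rightarrow> ('a \<times> 'a) set \<Rightarrow> (nat \<Rightarrow> 'a) \<Rightarrow> pform \<Rightarrow> bool" where
  "psat X r v (PEq i j) \<longleftrightarrow> v i = v j"
| "psat X r v (PRel i j) \<longleftrightarrow> (v i, v j) \<in> r"
| "psat X r v (PNeq i j) \<longleftrightarrow> v i \<noteq> v j"
| "psat X r v (PConj p q) \<longleftrightarrow> psat X r v p \<and> psat X r v q"
| "psat X r v (PDisj p q) \<longleftrightarrow> psat X r v p \<or> psat X r v q"
| "psat X r v (PAll i p) \<longleftrightarrow> (\<forall>a\<in>X. psat X r (v(i := a)) p)"
| "psat X r v (PEx i p) \<longleftrightarrow> (\<exists>a\<in>X. psat X r (v(i := a)) p)"

text \<open>Truth of a formula in a structure: satisfied under every assignment into the carrier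
  (for sentences in a nonempty structure this is independent of the assignment).\<close>
definition pmodels :: "'a set \<Rightarrow> ('a \<times> 'a) set \<Rightarrow> pform \<Rightarrow> bool" where
  "pmodels X r p \<longleftrightarrow> (\<forall>v. (\<forall>n. v n \<in> X) \<longrightarrow> psat X r v p)"

definition P_equiv :: "'a set \<Rightarrow> ('a \<times> 'a) set \<Rightarrow> 'b set \<Rightarrow> ('b \<times> 'b) set \<Rightarrow> bool" where
  "P_equiv X r Y s \<longleftrightarrow> (\<forall>p. psentence p \<longrightarrow> (pmodels X r p \<longleftrightarrow> pmodels Y s p))"

definition condensation :: "('a \<Rightarrow> 'b) \<Rightarrow> 'a set \<Rightarrow> ('a \<times> 'a) set \<Rightarrow> 'b set \<Rightarrow> ('b \<times> 'b) set \<Rightarrow> bool" where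
  "condensation F X r Y s \<longleftrightarrow> bij_betw F X Y \<and>
     (\<forall>x\<in>X. \<forall>x'\<in>X. (x, x') \<in> r \<longrightarrow> (F x, F x') \<in> s)"

definition condenses :: "'a set \<Rightarrow> ('a \<times> 'a) set \<Rightarrow> 'b set \<Rightarrow> ('b \<times> 'b) set \<Rightarrow> bool" where
  "condenses X r Y s \<longleftrightarrow> (\<exists>F. condensation F X r Y s)"

definition bi_condensable :: "'a set \<Rightarrow> ('a \<times> 'a) set \<Rightarrow> 'b set \<Rightarrow> ('b \<times> 'b) set \<Rightarrow> bool" where
  "bi_condensable X r Y s \<longleftrightarrow> condenses X r Y s \<and> condenses Y s X r"

definition in_C :: "'a set \<Rightarrow> ('a \<times> 'a) set \<Rightarrow> bool" where
  "in_C X r \<longleftrightarrow> countable X \<and> infinite X \<and> equiv X r \<and>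
     infinite {c \<in> X // r. card c = 1} \<and>
     (\<forall>n::nat. \<exists>c \<in> X // r. infinite c \<or> n \<le> card c)"

definition in_C_fin :: "'a set \<Rightarrow> ('a \<times> 'a) set \<Rightarrow> bool" where
  "in_C_fin X r \<longleftrightarrow> in_C X r \<and> (\<forall>c \<in> X // r. finite c)"

definition in_C_omega :: "'a set \<Rightarrow> ('a \<times> 'a) set \<Rightarrow> bool" where
  "in_C_omega X r \<longleftrightarrow> in_C X r \<and> \<not> in_C_fin X r"

end

theory Submission
  imports Defs
begin


definition ge :: "nat \<Rightarrow> 'a set \<Rightarrow> bool" where
  "ge n S \<longleftrightarrow> infinite S \<or> n \<le> card S"

lemma ge_mono: "ge n S \<Longrightarrow> m \<le> n \<Longrightarrow> ge m S"
  by (auto simp: ge_def)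

lemma ge_remove: "c \<in> S \<Longrightarrow> ge n (S - {c}) \<longleftrightarrow> ge (Suc n) S"
proof (cases "finite S")
  case True
  assume c: "c \<in> S"
  then have "card S > 0" using True card_gt_0_iff by blast
  then show ?thesis using True c by (auto simp: ge_def card_Diff_singleton)
qed (auto simp: ge_def)

lemma ge_1: "ge (Suc 0) S \<longleftrightarrow> S \<noteq> {}"
  unfolding ge_def using card_gt_0_iff[of S] by auto

lemma ge_inf: "infinite S \<Longrightarrow> ge n S"
  by (auto simp: ge_def)

lemma ge_image: "inj_on f S \<Longrightarrow> ge n (f ` S) \<longleftrightarrow> ge n S"
  by (auto simp: ge_def finite_image_iff card_image)

lemma ge_exact: "(finite c \<and> card c = s) \<longleftrightarrow> ge s c \<and> \<not> ge (Suc s) c"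
  by (auto simp: ge_def)

lemma ge_remove2:
  assumes "\<And>m. m \<le> Suc k \<Longrightarrow> ge m S \<longleftrightarrow> ge m S'" "c \<in> S \<longleftrightarrow> d \<in> S'" "n \<le> k"
  shows "ge n (S - {c}) \<longleftrightarrow> ge n (S' - {d})"
proof (cases "c \<in> S")
  case True
  then show ?thesis using assms ge_remove[of c S n] ge_remove[of d S' n] by auto
next
  case False
  then have "S - {c} = S" "S' - {d} = S'" using assms(2) by auto
  then show ?thesis using assms by auto
qed

lemma psat_cong: "(\<And>n. n \<in> fvars p \<Longrightarrow> v n = v' n) \<Longrightarrow> psat X r v p = psat X r v' p"
proof (induction p arbitrary: v v')
  case (PAll i p)
  have "\<And>a. psat X r (v(i:=a)) p = psat X r (v'(i:=a)) p"
    by (rule PAll.IH) (use PAll.prems in auto)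
  then show ?case by simp
next
  case (PEx i p)
  have "\<And>a. psat X r (v(i:=a)) p = psat X r (v'(i:=a)) p"
    by (rule PEx.IH) (use PEx.prems in auto)
  then show ?case by simp
next
  case (PConj p q)
  have "psat X r v p = psat X r v' p" by (rule PConj.IH(1)) (use PConj.prems in auto)
  moreover have "psat X r v q = psat X r v' q" by (rule PConj.IH(2)) (use PConj.prems in auto)
  ultimately show ?case by simp
next
  case (PDisj p q)
  have "psat X r v p = psat X r v' p" by (rule PDisj.IH(1)) (use PDisj.prems in auto)
  moreover have "psat X r v q = psat X r v' q" by (rule PDisj.IH(2)) (use PDisj.prems in auto)
  ultimately show ?case by simp
qed auto

lemma psat_condensation:
  assumes "condensation F X r Y s" "\<And>n. v n \<in> X" "psat X r v p"
  shows "psat Y s (F \<circ> v) p"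
  using assms(2,3)
proof (induction p arbitrary: v)
  case (PNeq i j)
  then show ?case using assms(1) unfolding condensation_def bij_betw_def inj_on_def by auto
next
  case (PRel i j)
  then show ?case using assms(1) unfolding condensation_def by auto
next
  case (PAll i p)
  show ?case unfolding psat.simps
  proof
    fix b assume "b \<in> Y"
    then obtain a where a: "a \<in> X" "b = F a" using assms(1) unfolding condensation_def bij_betw_def by auto
    have h1: "\<And>n. (v(i:=a)) n \<in> X" using PAll.prems(1) a by auto
    have h2: "psat X r (v(i:=a)) p" using PAll.prems(2) a by simp
    have "psat Y s (F \<circ> (v(i:=a))) p" by (rule PAll.IH[OF h1 h2])
    moreover have "F \<circ> (v(i:=a)) = (F \<circ> v)(i := b)" using a by auto
    ultimately show "psat Y s ((F \<circ> v)(i := b)) p" by simp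
  qed
next
  case (PEx i p)
  then obtain a where a: "a \<in> X" "psat X r (v(i:=a)) p" by auto
  have h1: "\<And>n. (v(i:=a)) n \<in> X" using PEx.prems(1) a by auto
  have "psat Y s (F \<circ> (v(i:=a))) p" by (rule PEx.IH[OF h1 a(2)])
  moreover have "F \<circ> (v(i:=a)) = (F \<circ> v)(i := F a)" by auto
  moreover have "F a \<in> Y" using a assms(1) unfolding condensation_def bij_betw_def by auto
  ultimately have "psat Y s ((F \<circ> v)(i := F a)) p \<and> F a \<in> Y" by simp
  then show ?case by (simp only: psat.simps) blast
qed auto

lemma pmodels_condenses:
  assumes "condenses X r Y s" "pmodels X r p"
  shows "pmodels Y s p"
  unfolding pmodels_def
proof (intro allI impI)
  fix w :: "nat \<Rightarrow> 'b" assume w: "\<forall>n. w n \<in> Y"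
  obtain F where F: "condensation F X r Y s" using assms(1) unfolding condenses_def by auto
  then have bij: "bij_betw F X Y" unfolding condensation_def by auto
  define v where "v = inv_into X F \<circ> w"
  have v: "\<And>n. v n \<in> X" using w bij unfolding v_def by (auto simp: bij_betw_def inv_into_into)
  have "F \<circ> v = w" using w bij unfolding v_def by (auto simp: bij_betw_def f_inv_into_f)
  moreover have "psat X r v p" using assms(2) v unfolding pmodels_def by auto
  ultimately show "psat Y s w p" using psat_condensation[OF F v] by auto
qed



definition Ecl :: "'a set \<Rightarrow> ('a \<times> 'a) set \<Rightarrow> 'a set \<Rightarrow> nat \<Rightarrow> 'a set set" where
  "Ecl A r M s = {c \<in> A//r. c \<inter> M = {} \<and> finite c \<and> card c = s}"

definition Gcl :: "'a set \<Rightarrow> ('a \<times> 'a) set \<Rightarrow> 'a set \<Rightarrow> nat \<Rightarrow> 'a set set" where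
  "Gcl A r M s = {c \<in> A//r. c \<inter> M = {} \<and> ge s c}"

definition Inv :: "'a set \<Rightarrow> ('a \<times> 'a) set \<Rightarrow> 'b set \<Rightarrow> ('b \<times> 'b) set \<Rightarrow> nat \<Rightarrow> ('a \<times> 'b) set \<Rightarrow> bool" where
  "Inv A rA B rB k P \<longleftrightarrow>
    (\<forall>(x,y)\<in>P. x \<in> A \<and> y \<in> B) \<and>
    (\<forall>(x,y)\<in>P. \<forall>(x',y')\<in>P. (x = x' \<longleftrightarrow> y = y') \<and> ((x,x') \<in> rA \<longleftrightarrow> (y,y') \<in> rB)) \<and>
    (\<forall>(x,y)\<in>P. \<forall>n\<le>k. ge n (rA``{x} - fst`P) = ge n (rB``{y} - snd`P)) \<and>
    (\<forall>s<k. \<forall>n\<le>k. ge n (Ecl A rA (fst`P) s) = ge n (Ecl B rB (snd`P) s)) \<and>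
    (\<forall>s\<le>k. \<forall>n\<le>k. ge n (Gcl A rA (fst`P) s) = ge n (Gcl B rB (snd`P) s))"

lemma Inv_mono: "Inv A rA B rB (Suc k) P \<Longrightarrow> Inv A rA B rB k P"
  unfolding Inv_def by auto

lemma fst_swap_img: "fst ` prod.swap ` P = snd ` P" by force
lemma snd_swap_img: "snd ` prod.swap ` P = fst ` P" by force

lemma ball_swap: "(\<forall>(x,y)\<in>prod.swap`P. Q x y) \<longleftrightarrow> (\<forall>(x,y)\<in>P. Q y x)" by auto

lemma Inv_sym: "Inv A rA B rB k P \<Longrightarrow> Inv B rB A rA k (prod.swap ` P)"
  unfolding Inv_def fst_swap_img snd_swap_img ball_swap
proof (elim conjE, intro conjI)
  assume h: "\<forall>(x, y)\<in>P. \<forall>(x', y')\<in>P. (x = x') = (y = y') \<and> ((x, x') \<in> rA) = ((y, y') \<in> rB)"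
  show "\<forall>(x, y)\<in>P. \<forall>(x', y')\<in>P. (y = y') = (x = x') \<and> ((y, y') \<in> rB) = ((x, x') \<in> rA)"
  proof (intro ballI, clarify)
    fix x y x' y' assume "(x,y) \<in> P" "(x',y') \<in> P"
    then show "(y = y') = (x = x') \<and> ((y, y') \<in> rB) = ((x, x') \<in> rA)" using h by fastforce
  qed
next
  assume h: "\<forall>(x, y)\<in>P. x \<in> A \<and> y \<in> B"
  then show "\<forall>(x, y)\<in>P. y \<in> B \<and> x \<in> A" by blast
next
  assume h: "\<forall>(x, y)\<in>P. \<forall>n\<le>k. ge n (rA `` {x} - fst ` P) = ge n (rB `` {y} - snd ` P)"
  show "\<forall>(x, y)\<in>P. \<forall>n\<le>k. ge n (rB `` {y} - snd ` P) = ge n (rA `` {x} - fst ` P)"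
  proof (intro ballI allI impI, clarify)
    fix x y n assume "(x,y) \<in> P" "n \<le> k"
    then have "ge n (rA `` {x} - fst ` P) = ge n (rB `` {y} - snd ` P)" using h by blast
    then show "ge n (rB `` {y} - snd ` P) = ge n (rA `` {x} - fst ` P)" by (rule sym)
  qed
next
  assume h: "\<forall>s<k. \<forall>n\<le>k. ge n (Ecl A rA (fst ` P) s) = ge n (Ecl B rB (snd ` P) s)"
  show "\<forall>s<k. \<forall>n\<le>k. ge n (Ecl B rB (snd ` P) s) = ge n (Ecl A rA (fst ` P) s)"
    using h by (metis (no_types))
next
  assume h: "\<forall>s\<le>k. \<forall>n\<le>k. ge n (Gcl A rA (fst ` P) s) = ge n (Gcl B rB (snd ` P) s)"
  show "\<forall>s\<le>k. \<forall>n\<le>k. ge n (Gcl B rB (snd ` P) s) = ge n (Gcl A rA (fst ` P) s)"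
    using h by (metis (no_types))
qed

lemma Inv_I1:
  assumes "Inv A rA B rB k P" "(x,y) \<in> P" "(x',y') \<in> P"
  shows "(x = x' \<longleftrightarrow> y = y') \<and> ((x,x') \<in> rA \<longleftrightarrow> (y,y') \<in> rB)"
proof -
  have h: "\<forall>(x,y)\<in>P. \<forall>(x',y')\<in>P. (x = x' \<longleftrightarrow> y = y') \<and> ((x,x') \<in> rA \<longleftrightarrow> (y,y') \<in> rB)"
    using assms(1)[unfolded Inv_def] by (rule conjunct1[OF conjunct2])
  have "\<forall>(x',y')\<in>P. (x = x' \<longleftrightarrow> y = y') \<and> ((x,x') \<in> rA \<longleftrightarrow> (y,y') \<in> rB)"
    using bspec[OF h assms(2)] by (simp only: case_prod_conv)
  from bspec[OF this assms(3)] show ?thesis by (simp only: case_prod_conv)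
qed

lemma Inv_I0:
  assumes "Inv A rA B rB k P" "(x,y) \<in> P"
  shows "x \<in> A \<and> y \<in> B"
proof -
  have h: "\<forall>(x,y)\<in>P. x \<in> A \<and> y \<in> B"
    using assms(1)[unfolded Inv_def] by (rule conjunct1)
  from bspec[OF h assms(2)] show ?thesis by (simp only: case_prod_conv)
qed

lemma Inv_I2:
  assumes "Inv A rA B rB k P" "(x,y) \<in> P" "n \<le> k"
  shows "ge n (rA``{x} - fst`P) = ge n (rB``{y} - snd`P)"
proof -
  have h: "\<forall>(x,y)\<in>P. \<forall>n\<le>k. ge n (rA``{x} - fst`P) = ge n (rB``{y} - snd`P)"
    using assms(1)[unfolded Inv_def] by (rule conjunct1[OF conjunct2[OF conjunct2]])
  have "\<forall>n\<le>k. ge n (rA``{x} - fst`P) = ge n (rB``{y} - snd`P)"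
    using bspec[OF h assms(2)] by (simp only: case_prod_conv)
  then show ?thesis using assms(3) by blast
qed

lemma Inv_I3:
  assumes "Inv A rA B rB k P" "s < k" "n \<le> k"
  shows "ge n (Ecl A rA (fst`P) s) = ge n (Ecl B rB (snd`P) s)"
proof -
  have h: "\<forall>s<k. \<forall>n\<le>k. ge n (Ecl A rA (fst`P) s) = ge n (Ecl B rB (snd`P) s)"
    using assms(1)[unfolded Inv_def] by (rule conjunct1[OF conjunct2[OF conjunct2[OF conjunct2]]])
  then show ?thesis using assms(2,3) by blast
qed

lemma Inv_I4:
  assumes "Inv A rA B rB k P" "s \<le> k" "n \<le> k"
  shows "ge n (Gcl A rA (fst`P) s) = ge n (Gcl B rB (snd`P) s)"
proof -
  have h: "\<forall>s\<le>k. \<forall>n\<le>k. ge n (Gcl A rA (fst`P) s) = ge n (Gcl B rB (snd`P) s)"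
    using assms(1)[unfolded Inv_def] by (rule conjunct2[OF conjunct2[OF conjunct2[OF conjunct2]]])
  then show ?thesis using assms(2,3) by blast
qed

lemma eqv_sym: assumes "equiv A r" "(x,y) \<in> r" shows "(y,x) \<in> r"
proof -
  have "sym r" using assms(1) by (simp add: equiv_def)
  then show ?thesis using assms(2) by (rule symD)
qed

lemma eqv_trans: assumes "equiv A r" "(x,y) \<in> r" "(y,z) \<in> r" shows "(x,z) \<in> r"
proof -
  have "trans r" using assms(1) by (simp add: equiv_def)
  then show ?thesis using assms(2,3) by (rule transD)
qed

lemma eqv_refl: assumes "equiv A r" "x \<in> A" shows "(x,x) \<in> r"
proof -
  have "refl_on A r" using assms(1) by (simp add: equiv_def)
  then show ?thesis using assms(2) by (rule refl_onD)
qed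

lemma eqv_type: assumes "equiv A r" "(x,y) \<in> r" shows "x \<in> A \<and> y \<in> A"
proof -
  have "r \<subseteq> A \<times> A" using assms(1) by (rule equiv_type)
  then show ?thesis using assms(2) by auto
qed

lemma cls_mem: 
  assumes "equiv A r" "c \<in> A//r" "a \<in> c" shows "c = r``{a}"
proof -
  obtain z where z: "c = r``{z}" "z \<in> A" using assms(2) by (rule quotientE)
  then have "(z,a) \<in> r" using assms(3) by simp
  then show ?thesis using z equiv_class_eq[OF assms(1)] by simp
qed

lemma cls_meet:
  assumes e: "equiv A r" and c: "c \<in> A//r" "a \<in> c" "(x,a) \<in> r" shows "x \<in> c"
proof -
  have ca: "c = r``{a}" using cls_mem[OF e c(1) c(2)] .
  have "(a,x) \<in> r" using e c(3) by (rule eqv_sym)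
  then show ?thesis unfolding ca by (rule ImageI[OF _ singletonI])
qed

lemma disj_same:
  assumes "equiv A r" "c \<in> A//r" "x \<in> M" "(x,a) \<in> r"
  shows "(c \<inter> insert a M = {}) = (c \<inter> M = {})"
proof
  assume h: "c \<inter> M = {}"
  have "a \<notin> c"
  proof
    assume "a \<in> c" then have "x \<in> c" using cls_meet[OF assms(1,2) _ assms(4)] by simp
    then show False using h assms(3) by blast
  qed
  then show "c \<inter> insert a M = {}" using h by simp
next
  assume "c \<inter> insert a M = {}" then show "c \<inter> M = {}" by blast
qed

lemma Ecl_insert_same: "equiv A r \<Longrightarrow> x \<in> M \<Longrightarrow> (x,a) \<in> r \<Longrightarrow> Ecl A r (insert a M) s = Ecl A r M s"
  unfolding Ecl_def using disj_same[of A r _ x M a] by (intro Collect_cong) blast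

lemma Gcl_insert_same: "equiv A r \<Longrightarrow> x \<in> M \<Longrightarrow> (x,a) \<in> r \<Longrightarrow> Gcl A r (insert a M) s = Gcl A r M s"
  unfolding Gcl_def using disj_same[of A r _ x M a] by (intro Collect_cong) blast

lemma quot_ins: 
  assumes e: "equiv A r" and c: "c \<in> A//r" and a: "a \<in> A"
  shows "(c \<inter> insert a M = {}) \<longleftrightarrow> (c \<inter> M = {} \<and> c \<noteq> r``{a})"
proof -
  have 1: "a \<in> c \<longleftrightarrow> c = r``{a}"
  proof
    assume "a \<in> c" then show "c = r``{a}" by (rule cls_mem[OF e c])
  next
    assume ca: "c = r``{a}"
    show "a \<in> c" unfolding ca by (rule equiv_class_self[OF e a])
  qed
  have 2: "(c \<inter> insert a M = {}) \<longleftrightarrow> a \<notin> c \<and> c \<inter> M = {}" by simp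
  show ?thesis
  proof
    assume "c \<inter> insert a M = {}"
    then have "a \<notin> c \<and> c \<inter> M = {}" by (rule iffD1[OF 2])
    then show "c \<inter> M = {} \<and> c \<noteq> r``{a}" using 1 by (simp only: not_True_eq_False simp_thms) 
  next
    assume h: "c \<inter> M = {} \<and> c \<noteq> r``{a}"
    then have "a \<notin> c" using 1 by (simp only: simp_thms)
    then have "a \<notin> c \<and> c \<inter> M = {}" using h by (rule conjI[OF _ conjunct1])
    then show "c \<inter> insert a M = {}" by (rule iffD2[OF 2])
  qed
qed

lemma Ecl_insert_new:
  assumes e: "equiv A r" and a: "a \<in> A"
  shows "Ecl A r (insert a M) s = Ecl A r M s - {r``{a}}"
proof (rule set_eqI)
  fix c
  show "c \<in> Ecl A r (insert a M) s \<longleftrightarrow> c \<in> Ecl A r M s - {r``{a}}"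
  proof (cases "c \<in> A//r")
    case True
    then show ?thesis using quot_ins[OF e True a, of M] unfolding Ecl_def apply simp by argo
  next
    case False
    then show ?thesis unfolding Ecl_def by simp
  qed
qed

lemma Gcl_insert_new:
  assumes e: "equiv A r" and a: "a \<in> A"
  shows "Gcl A r (insert a M) s = Gcl A r M s - {r``{a}}"
proof (rule set_eqI)
  fix c
  show "c \<in> Gcl A r (insert a M) s \<longleftrightarrow> c \<in> Gcl A r M s - {r``{a}}"
  proof (cases "c \<in> A//r")
    case True
    then show ?thesis using quot_ins[OF e True a, of M] unfolding Gcl_def apply simp by argo
  next
    case False
    then show ?thesis unfolding Gcl_def by simp
  qed
qed



lemma ball_prodI: "(\<And>x y. (x,y) \<in> P \<Longrightarrow> Q x y) \<Longrightarrow> \<forall>(x,y)\<in>P. Q x y"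
  by auto

lemma InvI:
  assumes a1: "\<And>x y. (x,y)\<in>P \<Longrightarrow> x \<in> A \<and> y \<in> B"
  and a2: "\<And>x y x' y'. (x,y)\<in>P \<Longrightarrow> (x',y')\<in>P \<Longrightarrow> (x = x' \<longleftrightarrow> y = y') \<and> ((x,x') \<in> rA \<longleftrightarrow> (y,y') \<in> rB)"
  and a3: "\<And>x y n. (x,y)\<in>P \<Longrightarrow> n \<le> k \<Longrightarrow> ge n (rA``{x} - fst`P) = ge n (rB``{y} - snd`P)"
  and a4: "\<And>s n. s<k \<Longrightarrow> n\<le>k \<Longrightarrow> ge n (Ecl A rA (fst`P) s) = ge n (Ecl B rB (snd`P) s)"
  and a5: "\<And>s n. s\<le>k \<Longrightarrow> n\<le>k \<Longrightarrow> ge n (Gcl A rA (fst`P) s) = ge n (Gcl B rB (snd`P) s)"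
  shows "Inv A rA B rB k P"
  unfolding Inv_def
proof (intro conjI)
  show "\<forall>(x,y)\<in>P. x \<in> A \<and> y \<in> B" by (rule ball_prodI) (rule a1)
  show "\<forall>(x,y)\<in>P. \<forall>(x',y')\<in>P. (x = x' \<longleftrightarrow> y = y') \<and> ((x,x') \<in> rA \<longleftrightarrow> (y,y') \<in> rB)"
    by (rule ball_prodI, rule ball_prodI) (rule a2)
  show "\<forall>(x,y)\<in>P. \<forall>n\<le>k. ge n (rA``{x} - fst`P) = ge n (rB``{y} - snd`P)"
    by (rule ball_prodI, intro allI impI) (rule a3)
  show "\<forall>s<k. \<forall>n\<le>k. ge n (Ecl A rA (fst`P) s) = ge n (Ecl B rB (snd`P) s)"
    by (intro allI impI) (rule a4)
  show "\<forall>s\<le>k. \<forall>n\<le>k. ge n (Gcl A rA (fst`P) s) = ge n (Gcl B rB (snd`P) s)"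
    by (intro allI impI) (rule a5)
qed

lemma I1_ins:
  assumes "\<And>x y x' y'. (x,y)\<in>P \<Longrightarrow> (x',y')\<in>P \<Longrightarrow> Q x y x' y'"
    "\<And>x' y'. (x',y')\<in>P \<Longrightarrow> Q a b x' y' \<and> Q x' y' a b" "Q a b a b"
    "(x1,y1) \<in> insert (a,b) P" "(x2,y2) \<in> insert (a,b) P"
  shows "Q x1 y1 x2 y2"
  using assms by auto

lemma swap_swap_img: "prod.swap ` prod.swap ` P = P" by force

lemma step:
  assumes eA: "equiv A rA" and eB: "equiv B rB" and inv: "Inv A rA B rB (Suc k) P" and a: "a \<in> A"
  shows "\<exists>b\<in>B. Inv A rA B rB k (insert (a,b) P)"
proof (cases "a \<in> fst ` P")
  case True
  then obtain y where y: "(a,y) \<in> P" by force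
  then have "insert (a,y) P = P" by (rule insert_absorb)
  moreover have "y \<in> B" using Inv_I0[OF inv y] by simp
  ultimately show ?thesis using Inv_mono[OF inv] by (intro bexI[of _ y]) simp_all
next
  case aM: False
  show ?thesis
  proof (cases "\<exists>x y. (x,y) \<in> P \<and> (x,a) \<in> rA")
    case True
    then obtain x y where xy: "(x,y) \<in> P" "(x,a) \<in> rA" by blast
    have "a \<in> rA``{x} - fst`P" using xy(2) aM by simp
    then have "rA``{x} - fst`P \<noteq> {}" by blast
    then have "ge (Suc 0) (rA``{x} - fst`P)" by (rule iffD2[OF ge_1])
    then have "ge (Suc 0) (rB``{y} - snd`P)" using Inv_I2[OF inv xy(1), of "Suc 0"] by simp
    then have "rB``{y} - snd`P \<noteq> {}" by (rule iffD1[OF ge_1])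
    then obtain b where "b \<in> rB``{y} - snd`P" by blast
    then have b: "b \<in> rB``{y}" "b \<notin> snd`P" by simp_all
    have yb: "(y,b) \<in> rB" using b(1) by simp
    have bB: "b \<in> B" using eqv_type[OF eB yb] by simp
    have xM: "x \<in> fst`P" using xy(1) by force
    have yM: "y \<in> snd`P" using xy(1) by force
    have KA: "(a,z) \<in> rA \<longleftrightarrow> (x,z) \<in> rA" for z
      using eqv_trans[OF eA xy(2), of z] eqv_trans[OF eA eqv_sym[OF eA xy(2)], of z] by argo
    have KB: "(b,z) \<in> rB \<longleftrightarrow> (y,z) \<in> rB" for z
      using eqv_trans[OF eB yb, of z] eqv_trans[OF eB eqv_sym[OF eB yb], of z] by argo
    have KA': "(z,a) \<in> rA \<longleftrightarrow> (x,z) \<in> rA" for z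
      using KA[of z] eqv_sym[OF eA, of z a] eqv_sym[OF eA, of a z] by argo
    have KB': "(z,b) \<in> rB \<longleftrightarrow> (y,z) \<in> rB" for z
      using KB[of z] eqv_sym[OF eB, of z b] eqv_sym[OF eB, of b z] by argo
    have K1: "\<And>x' y'. (x',y') \<in> insert (a,b) P \<Longrightarrow> ((x,x') \<in> rA \<longleftrightarrow> (y,y') \<in> rB)"
    proof -
      fix x' y' assume "(x',y') \<in> insert (a,b) P"
      then consider "(x',y') = (a,b)" | "(x',y') \<in> P" by blast
      then show "((x,x') \<in> rA \<longleftrightarrow> (y,y') \<in> rB)"
      proof cases
        case 1 then show ?thesis using xy(2) yb by simp
      next
        case 2 then show ?thesis using Inv_I1[OF inv xy(1) 2] by simp
      qed
    qed
    have fP: "fst ` insert (a,b) P = insert a (fst`P)" by simp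
    have sP: "snd ` insert (a,b) P = insert b (snd`P)" by simp
    have "Inv A rA B rB k (insert (a,b) P)"
    proof (rule InvI)
      fix x' y' assume "(x',y') \<in> insert (a,b) P"
      then show "x' \<in> A \<and> y' \<in> B" using Inv_I0[OF inv] a bB by blast
    next
      fix x1 y1 x2 y2 assume h: "(x1,y1) \<in> insert (a,b) P" "(x2,y2) \<in> insert (a,b) P"
      show "(x1 = x2 \<longleftrightarrow> y1 = y2) \<and> ((x1,x2) \<in> rA \<longleftrightarrow> (y1,y2) \<in> rB)"
      proof (rule I1_ins[where Q="\<lambda>x1 y1 x2 y2. (x1 = x2 \<longleftrightarrow> y1 = y2) \<and> ((x1,x2) \<in> rA \<longleftrightarrow> (y1,y2) \<in> rB)", OF _ _ _ h])
        fix x y x' y' assume "(x,y) \<in> P" "(x',y') \<in> P"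
        then show "(x = x' \<longleftrightarrow> y = y') \<and> ((x,x') \<in> rA \<longleftrightarrow> (y,y') \<in> rB)" by (rule Inv_I1[OF inv])
      next
        fix x' y' assume h': "(x',y') \<in> P"
        have ne: "a \<noteq> x'" "b \<noteq> y'" using h' aM b(2) by force+
        have "(x,x') \<in> rA \<longleftrightarrow> (y,y') \<in> rB" using Inv_I1[OF inv xy(1) h'] by simp
        then show "((a = x' \<longleftrightarrow> b = y') \<and> ((a,x') \<in> rA \<longleftrightarrow> (b,y') \<in> rB)) \<and>
                   ((x' = a \<longleftrightarrow> y' = b) \<and> ((x',a) \<in> rA \<longleftrightarrow> (y',b) \<in> rB))"
          using ne KA KB KA' KB' by simp
      next
        show "(a = a \<longleftrightarrow> b = b) \<and> ((a,a) \<in> rA \<longleftrightarrow> (b,b) \<in> rB)"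
          using eqv_refl[OF eA a] eqv_refl[OF eB bB] by simp
      qed
    next
      fix x' y' n assume h: "(x',y') \<in> insert (a,b) P" and n: "n \<le> k"
      show "ge n (rA``{x'} - fst ` insert (a,b) P) = ge n (rB``{y'} - snd ` insert (a,b) P)"
      proof (cases "(x,x') \<in> rA")
        case True
        then have T2: "(y,y') \<in> rB" using K1[OF h] by simp
        have e1: "rA``{x'} = rA``{x}" using equiv_class_eq[OF eA True] by simp
        have e2: "rB``{y'} = rB``{y}" using equiv_class_eq[OF eB T2] by simp
        have s1: "rA``{x'} - fst ` insert (a,b) P = (rA``{x} - fst`P) - {a}" unfolding fP e1 by blast
        have s2: "rB``{y'} - snd ` insert (a,b) P = (rB``{y} - snd`P) - {b}" unfolding sP e2 by blast
        have am: "a \<in> rA``{x} - fst`P" using xy(2) aM by simp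
        have bm: "b \<in> rB``{y} - snd`P" using b by simp
        have "ge (Suc n) (rA``{x} - fst`P) = ge (Suc n) (rB``{y} - snd`P)"
          using Inv_I2[OF inv xy(1)] n by simp
        then show ?thesis unfolding s1 s2 ge_remove[OF am] ge_remove[OF bm] .
      next
        case False
        then have F2: "(y,y') \<notin> rB" using K1[OF h] by simp
        have old: "(x',y') \<in> P" using h False xy(2) by blast
        have na: "a \<notin> rA``{x'}" using KA' False eqv_sym[OF eA] by blast
        have nb: "b \<notin> rB``{y'}" using KB' F2 eqv_sym[OF eB] by blast
        have s1: "rA``{x'} - fst ` insert (a,b) P = rA``{x'} - fst`P" unfolding fP using na by blast
        have s2: "rB``{y'} - snd ` insert (a,b) P = rB``{y'} - snd`P" unfolding sP using nb by blast
        show ?thesis unfolding s1 s2 using Inv_I2[OF inv old] n by simp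
      qed
    next
      fix s n assume "s < k" "n \<le> k"
      then show "ge n (Ecl A rA (fst ` insert (a,b) P) s) = ge n (Ecl B rB (snd ` insert (a,b) P) s)"
        unfolding fP sP Ecl_insert_same[OF eA xM xy(2)] Ecl_insert_same[OF eB yM yb]
        using Inv_I3[OF inv] by simp
    next
      fix s n assume "s \<le> k" "n \<le> k"
      then show "ge n (Gcl A rA (fst ` insert (a,b) P) s) = ge n (Gcl B rB (snd ` insert (a,b) P) s)"
        unfolding fP sP Gcl_insert_same[OF eA xM xy(2)] Gcl_insert_same[OF eB yM yb]
        using Inv_I4[OF inv] by simp
    qed
    then show ?thesis using bB by blast
  next
    case noc: False
    define c where "c = rA``{a}"
    have cQ: "c \<in> A//rA" unfolding c_def using a by (rule quotientI)
    have cM: "c \<inter> fst`P = {}"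
    proof (rule ccontr)
      assume "c \<inter> fst`P \<noteq> {}"
      then obtain x y where "(x,y) \<in> P" "x \<in> c" by force
      then have "(x,y) \<in> P" "(x,a) \<in> rA" unfolding c_def using eqv_sym[OF eA] by auto
      then show False using noc by blast
    qed
    obtain d where dQ: "d \<in> B//rB" and dM: "d \<inter> snd`P = {}" and sim: "\<And>m. m \<le> Suc k \<Longrightarrow> ge m c = ge m d"
    proof (cases "finite c \<and> card c \<le> k")
      case True
      have "c \<in> Ecl A rA (fst`P) (card c)" unfolding Ecl_def using cQ cM True by simp
      then have "Ecl A rA (fst`P) (card c) \<noteq> {}" by blast
      then have "ge (Suc 0) (Ecl A rA (fst`P) (card c))" by (rule iffD2[OF ge_1])
      then have "ge (Suc 0) (Ecl B rB (snd`P) (card c))" using Inv_I3[OF inv, of "card c" "Suc 0"] True by simp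
      then have "Ecl B rB (snd`P) (card c) \<noteq> {}" by (rule iffD1[OF ge_1])
      then obtain d where "d \<in> Ecl B rB (snd`P) (card c)" by blast
      then have d: "d \<in> B//rB" "d \<inter> snd`P = {}" "finite d" "card d = card c" unfolding Ecl_def by auto
      have "\<And>m. ge m c = ge m d" unfolding ge_def using d(3,4) True by simp
      then show ?thesis using that d(1,2) by blast
    next
      case False
      then have gc: "ge (Suc k) c" unfolding ge_def by auto
      have "c \<in> Gcl A rA (fst`P) (Suc k)" unfolding Gcl_def using cQ cM gc by simp
      then have "Gcl A rA (fst`P) (Suc k) \<noteq> {}" by blast
      then have "ge (Suc 0) (Gcl A rA (fst`P) (Suc k))" by (rule iffD2[OF ge_1])
      then have "ge (Suc 0) (Gcl B rB (snd`P) (Suc k))" using Inv_I4[OF inv, of "Suc k" "Suc 0"] by simp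
      then have "Gcl B rB (snd`P) (Suc k) \<noteq> {}" by (rule iffD1[OF ge_1])
      then obtain d where "d \<in> Gcl B rB (snd`P) (Suc k)" by blast
      then have d: "d \<in> B//rB" "d \<inter> snd`P = {}" "ge (Suc k) d" unfolding Gcl_def by auto
      have "\<And>m. m \<le> Suc k \<Longrightarrow> ge m c = ge m d" using ge_mono[OF gc] ge_mono[OF d(3)] by simp
      then show ?thesis using that d(1,2) by blast
    qed
    have "d \<noteq> {}" using in_quotient_imp_non_empty[OF eB dQ] .
    then obtain b where bd: "b \<in> d" by blast
    have dEq: "d = rB``{b}" using cls_mem[OF eB dQ bd] .
    have bB: "b \<in> B" using in_quotient_imp_subset[OF eB dQ] bd by blast
    have bM: "b \<notin> snd`P" using dM bd by blast
    have aC: "a \<in> c" unfolding c_def using eqv_refl[OF eA a] by simp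
    have nA: "\<And>x' y'. (x',y') \<in> P \<Longrightarrow> (x',a) \<notin> rA \<and> (a,x') \<notin> rA"
      using noc eqv_sym[OF eA] by blast
    have nB: "\<And>x' y'. (x',y') \<in> P \<Longrightarrow> (y',b) \<notin> rB \<and> (b,y') \<notin> rB"
    proof -
      fix x' y' assume h: "(x',y') \<in> P"
      have "y' \<in> snd`P" using h by force
      then have "(b,y') \<notin> rB" using dM dEq by blast
      then show "(y',b) \<notin> rB \<and> (b,y') \<notin> rB" using eqv_sym[OF eB] by blast
    qed
    have fP: "fst ` insert (a,b) P = insert a (fst`P)" by simp
    have sP: "snd ` insert (a,b) P = insert b (snd`P)" by simp
    have cIn: "\<And>s. c \<in> Ecl A rA (fst`P) s \<longleftrightarrow> finite c \<and> card c = s" unfolding Ecl_def using cQ cM by simp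
    have dIn: "\<And>s. d \<in> Ecl B rB (snd`P) s \<longleftrightarrow> finite d \<and> card d = s" unfolding Ecl_def using dQ dM by simp
    have cIn': "\<And>s. c \<in> Gcl A rA (fst`P) s \<longleftrightarrow> ge s c" unfolding Gcl_def using cQ cM by simp
    have dIn': "\<And>s. d \<in> Gcl B rB (snd`P) s \<longleftrightarrow> ge s d" unfolding Gcl_def using dQ dM by simp
    have "Inv A rA B rB k (insert (a,b) P)"
    proof (rule InvI)
      fix x' y' assume "(x',y') \<in> insert (a,b) P"
      then show "x' \<in> A \<and> y' \<in> B" using Inv_I0[OF inv] a bB by blast
    next
      fix x1 y1 x2 y2 assume h: "(x1,y1) \<in> insert (a,b) P" "(x2,y2) \<in> insert (a,b) P"
      show "(x1 = x2 \<longleftrightarrow> y1 = y2) \<and> ((x1,x2) \<in> rA \<longleftrightarrow> (y1,y2) \<in> rB)"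
      proof (rule I1_ins[where Q="\<lambda>x1 y1 x2 y2. (x1 = x2 \<longleftrightarrow> y1 = y2) \<and> ((x1,x2) \<in> rA \<longleftrightarrow> (y1,y2) \<in> rB)", OF _ _ _ h])
        fix x y x' y' assume "(x,y) \<in> P" "(x',y') \<in> P"
        then show "(x = x' \<longleftrightarrow> y = y') \<and> ((x,x') \<in> rA \<longleftrightarrow> (y,y') \<in> rB)" by (rule Inv_I1[OF inv])
      next
        fix x' y' assume h': "(x',y') \<in> P"
        have ne: "a \<noteq> x'" "b \<noteq> y'" using h' aM bM by force+
        show "((a = x' \<longleftrightarrow> b = y') \<and> ((a,x') \<in> rA \<longleftrightarrow> (b,y') \<in> rB)) \<and>
                   ((x' = a \<longleftrightarrow> y' = b) \<and> ((x',a) \<in> rA \<longleftrightarrow> (y',b) \<in> rB))"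
          using ne nA[OF h'] nB[OF h'] by simp
      next
        show "(a = a \<longleftrightarrow> b = b) \<and> ((a,a) \<in> rA \<longleftrightarrow> (b,b) \<in> rB)"
          using eqv_refl[OF eA a] eqv_refl[OF eB bB] by simp
      qed
    next
      fix x' y' n assume h: "(x',y') \<in> insert (a,b) P" and n: "n \<le> k"
      then consider "(x',y') = (a,b)" | "(x',y') \<in> P" by blast
      then show "ge n (rA``{x'} - fst ` insert (a,b) P) = ge n (rB``{y'} - snd ` insert (a,b) P)"
      proof cases
        case 1
        then have xa: "x' = a" "y' = b" by auto
        have s1: "rA``{x'} - fst ` insert (a,b) P = c - {a}" unfolding fP xa c_def[symmetric] using cM by blast
        have s2: "rB``{y'} - snd ` insert (a,b) P = d - {b}" unfolding sP xa dEq[symmetric] using dM by blast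
        show ?thesis unfolding s1 s2 ge_remove[OF aC] ge_remove[OF bd] using sim n by simp
      next
        case 2
        have na: "a \<notin> rA``{x'}" using nA[OF 2] by simp
        have nb: "b \<notin> rB``{y'}" using nB[OF 2] by simp
        have s1: "rA``{x'} - fst ` insert (a,b) P = rA``{x'} - fst`P" unfolding fP using na by blast
        have s2: "rB``{y'} - snd ` insert (a,b) P = rB``{y'} - snd`P" unfolding sP using nb by blast
        show ?thesis unfolding s1 s2 using Inv_I2[OF inv 2] n by simp
      qed
    next
      fix s n assume s: "s < k" and n: "n \<le> k"
      have e1: "Ecl A rA (fst ` insert (a,b) P) s = Ecl A rA (fst`P) s - {c}"
        unfolding fP c_def by (rule Ecl_insert_new[OF eA a])
      have e2: "Ecl B rB (snd ` insert (a,b) P) s = Ecl B rB (snd`P) s - {d}"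
        unfolding sP dEq by (rule Ecl_insert_new[OF eB bB])
      have m: "\<And>m. m \<le> Suc k \<Longrightarrow> ge m (Ecl A rA (fst`P) s) = ge m (Ecl B rB (snd`P) s)"
        using Inv_I3[OF inv] s by simp
      have cd: "c \<in> Ecl A rA (fst`P) s \<longleftrightarrow> d \<in> Ecl B rB (snd`P) s"
        unfolding cIn dIn ge_exact using sim s by simp
      show "ge n (Ecl A rA (fst ` insert (a,b) P) s) = ge n (Ecl B rB (snd ` insert (a,b) P) s)"
        unfolding e1 e2 by (rule ge_remove2[OF m cd n])
    next
      fix s n assume s: "s \<le> k" and n: "n \<le> k"
      have e1: "Gcl A rA (fst ` insert (a,b) P) s = Gcl A rA (fst`P) s - {c}"
        unfolding fP c_def by (rule Gcl_insert_new[OF eA a])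
      have e2: "Gcl B rB (snd ` insert (a,b) P) s = Gcl B rB (snd`P) s - {d}"
        unfolding sP dEq by (rule Gcl_insert_new[OF eB bB])
      have m: "\<And>m. m \<le> Suc k \<Longrightarrow> ge m (Gcl A rA (fst`P) s) = ge m (Gcl B rB (snd`P) s)"
        using Inv_I4[OF inv] s by simp
      have cd: "c \<in> Gcl A rA (fst`P) s \<longleftrightarrow> d \<in> Gcl B rB (snd`P) s"
        unfolding cIn' dIn' using sim s by simp
      show "ge n (Gcl A rA (fst ` insert (a,b) P) s) = ge n (Gcl B rB (snd ` insert (a,b) P) s)"
        unfolding e1 e2 by (rule ge_remove2[OF m cd n])
    qed
    then show ?thesis using bB by blast
  qed
qed



lemma step_back:
  assumes eA: "equiv A rA" and eB: "equiv B rB" and inv: "Inv A rA B rB (Suc k) P" and b: "b \<in> B"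
  shows "\<exists>a\<in>A. Inv A rA B rB k (insert (a,b) P)"
proof -
  obtain a where a: "a \<in> A" and i2: "Inv B rB A rA k (insert (b,a) (prod.swap`P))"
    using step[OF eB eA Inv_sym[OF inv] b] by blast
  have "Inv A rA B rB k (prod.swap ` insert (b,a) (prod.swap`P))" using i2 by (rule Inv_sym)
  moreover have "prod.swap ` insert (b,a) (prod.swap`P) = insert (a,b) P" by (simp add: swap_swap_img)
  ultimately show ?thesis using a by auto
qed

fun qd :: "pform \<Rightarrow> nat" where
  "qd (PEq i j) = 0"
| "qd (PRel i j) = 0"
| "qd (PNeq i j) = 0"
| "qd (PConj p q) = max (qd p) (qd q)"
| "qd (PDisj p q) = max (qd p) (qd q)"
| "qd (PAll i p) = Suc (qd p)"
| "qd (PEx i p) = Suc (qd p)"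

lemma ef:
  assumes eA: "equiv A rA" and eB: "equiv B rB"
  shows "Inv A rA B rB k (set ps) \<Longrightarrow> qd p \<le> k \<Longrightarrow> (\<forall>n\<in>fvars p. \<sigma> n < length ps) \<Longrightarrow>
         psat A rA (\<lambda>n. fst (ps!(\<sigma> n))) p = psat B rB (\<lambda>n. snd (ps!(\<sigma> n))) p"
proof (induction p arbitrary: k ps \<sigma>)
  case (PEq i j)
  have pi: "(fst (ps!(\<sigma> i)), snd (ps!(\<sigma> i))) \<in> set ps" using PEq.prems(3) by simp
  have pj: "(fst (ps!(\<sigma> j)), snd (ps!(\<sigma> j))) \<in> set ps" using PEq.prems(3) by simp
  show ?case using Inv_I1[OF PEq.prems(1) pi pj] by simp
next
  case (PRel i j)
  have pi: "(fst (ps!(\<sigma> i)), snd (ps!(\<sigma> i))) \<in> set ps" using PRel.prems(3) by simp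
  have pj: "(fst (ps!(\<sigma> j)), snd (ps!(\<sigma> j))) \<in> set ps" using PRel.prems(3) by simp
  show ?case using Inv_I1[OF PRel.prems(1) pi pj] by simp
next
  case (PNeq i j)
  have pi: "(fst (ps!(\<sigma> i)), snd (ps!(\<sigma> i))) \<in> set ps" using PNeq.prems(3) by simp
  have pj: "(fst (ps!(\<sigma> j)), snd (ps!(\<sigma> j))) \<in> set ps" using PNeq.prems(3) by simp
  show ?case using Inv_I1[OF PNeq.prems(1) pi pj] by simp
next
  case (PConj p q)
  have 1: "psat A rA (\<lambda>n. fst (ps!(\<sigma> n))) p = psat B rB (\<lambda>n. snd (ps!(\<sigma> n))) p"
    by (rule PConj.IH(1)[OF PConj.prems(1)]) (use PConj.prems(2,3) in auto)
  have 2: "psat A rA (\<lambda>n. fst (ps!(\<sigma> n))) q = psat B rB (\<lambda>n. snd (ps!(\<sigma> n))) q"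
    by (rule PConj.IH(2)[OF PConj.prems(1)]) (use PConj.prems(2,3) in auto)
  show ?case using 1 2 by simp
next
  case (PDisj p q)
  have 1: "psat A rA (\<lambda>n. fst (ps!(\<sigma> n))) p = psat B rB (\<lambda>n. snd (ps!(\<sigma> n))) p"
    by (rule PDisj.IH(1)[OF PDisj.prems(1)]) (use PDisj.prems(2,3) in auto)
  have 2: "psat A rA (\<lambda>n. fst (ps!(\<sigma> n))) q = psat B rB (\<lambda>n. snd (ps!(\<sigma> n))) q"
    by (rule PDisj.IH(2)[OF PDisj.prems(1)]) (use PDisj.prems(2,3) in auto)
  show ?case using 1 2 by simp
next
  case (PEx i q)
  have "Suc (qd q) \<le> k" using PEx.prems(2) by simp
  then obtain k' where k: "k = Suc k'" "qd q \<le> k'" by (cases k) auto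
  have inv: "Inv A rA B rB (Suc k') (set ps)" using PEx.prems(1) k(1) by simp
  define v where "v = (\<lambda>n. fst (ps!(\<sigma> n)))"
  define w where "w = (\<lambda>n. snd (ps!(\<sigma> n)))"
  define \<sigma>' where "\<sigma>' = \<sigma>(i := length ps)"
  have congA: "psat A rA (\<lambda>n. fst ((ps@[(a,b)])!(\<sigma>' n))) q = psat A rA (v(i:=a)) q" for a b
    by (rule psat_cong) (use PEx.prems(3) in \<open>auto simp: nth_append v_def \<sigma>'_def\<close>)
  have congB: "psat B rB (\<lambda>n. snd ((ps@[(a,b)])!(\<sigma>' n))) q = psat B rB (w(i:=b)) q" for a b
    by (rule psat_cong) (use PEx.prems(3) in \<open>auto simp: nth_append w_def \<sigma>'_def\<close>)
  have IH: "psat A rA (v(i:=a)) q = psat B rB (w(i:=b)) q"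
    if "Inv A rA B rB k' (insert (a,b) (set ps))" for a b
  proof -
    have s: "set (ps@[(a,b)]) = insert (a,b) (set ps)" by simp
    have "psat A rA (\<lambda>n. fst ((ps@[(a,b)])!(\<sigma>' n))) q = psat B rB (\<lambda>n. snd ((ps@[(a,b)])!(\<sigma>' n))) q"
    proof (rule PEx.IH)
      show "Inv A rA B rB k' (set (ps@[(a,b)]))" using that unfolding s .
      show "qd q \<le> k'" by (rule k(2))
      show "\<forall>n\<in>fvars q. \<sigma>' n < length (ps@[(a,b)])"
      proof
        fix n assume n: "n \<in> fvars q"
        show "\<sigma>' n < length (ps@[(a,b)])"
        proof (cases "n = i")
          case True then show ?thesis unfolding \<sigma>'_def by simp
        next
          case False
          then have "n \<in> fvars (PEx i q)" using n by simp
          then have "\<sigma> n < length ps" using PEx.prems(3) by blast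
          then show ?thesis unfolding \<sigma>'_def using False by simp
        qed
      qed
    qed
    then show ?thesis using congA congB by simp
  qed
  show ?case unfolding v_def[symmetric] w_def[symmetric] psat.simps
  proof
    assume "\<exists>a\<in>A. psat A rA (v(i := a)) q"
    then obtain a where a: "a \<in> A" "psat A rA (v(i := a)) q" by blast
    obtain b where b: "b \<in> B" "Inv A rA B rB k' (insert (a,b) (set ps))" using step[OF eA eB inv a(1)] by blast
    show "\<exists>b\<in>B. psat B rB (w(i := b)) q" using IH[OF b(2)] a(2) b(1) by blast
  next
    assume "\<exists>b\<in>B. psat B rB (w(i := b)) q"
    then obtain b where b: "b \<in> B" "psat B rB (w(i := b)) q" by blast
    obtain a where a: "a \<in> A" "Inv A rA B rB k' (insert (a,b) (set ps))" using step_back[OF eA eB inv b(1)] by blast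
    show "\<exists>a\<in>A. psat A rA (v(i := a)) q" using IH[OF a(2)] a(1) b(2) by blast
  qed
next
  case (PAll i q)
  have "Suc (qd q) \<le> k" using PAll.prems(2) by simp
  then obtain k' where k: "k = Suc k'" "qd q \<le> k'" by (cases k) auto
  have inv: "Inv A rA B rB (Suc k') (set ps)" using PAll.prems(1) k(1) by simp
  define v where "v = (\<lambda>n. fst (ps!(\<sigma> n)))"
  define w where "w = (\<lambda>n. snd (ps!(\<sigma> n)))"
  define \<sigma>' where "\<sigma>' = \<sigma>(i := length ps)"
  have congA: "psat A rA (\<lambda>n. fst ((ps@[(a,b)])!(\<sigma>' n))) q = psat A rA (v(i:=a)) q" for a b
    by (rule psat_cong) (use PAll.prems(3) in \<open>auto simp: nth_append v_def \<sigma>'_def\<close>)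
  have congB: "psat B rB (\<lambda>n. snd ((ps@[(a,b)])!(\<sigma>' n))) q = psat B rB (w(i:=b)) q" for a b
    by (rule psat_cong) (use PAll.prems(3) in \<open>auto simp: nth_append w_def \<sigma>'_def\<close>)
  have IH: "psat A rA (v(i:=a)) q = psat B rB (w(i:=b)) q"
    if "Inv A rA B rB k' (insert (a,b) (set ps))" for a b
  proof -
    have s: "set (ps@[(a,b)]) = insert (a,b) (set ps)" by simp
    have "psat A rA (\<lambda>n. fst ((ps@[(a,b)])!(\<sigma>' n))) q = psat B rB (\<lambda>n. snd ((ps@[(a,b)])!(\<sigma>' n))) q"
    proof (rule PAll.IH)
      show "Inv A rA B rB k' (set (ps@[(a,b)]))" using that unfolding s .
      show "qd q \<le> k'" by (rule k(2))
      show "\<forall>n\<in>fvars q. \<sigma>' n < length (ps@[(a,b)])"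
      proof
        fix n assume n: "n \<in> fvars q"
        show "\<sigma>' n < length (ps@[(a,b)])"
        proof (cases "n = i")
          case True then show ?thesis unfolding \<sigma>'_def by simp
        next
          case False
          then have "n \<in> fvars (PAll i q)" using n by simp
          then have "\<sigma> n < length ps" using PAll.prems(3) by blast
          then show ?thesis unfolding \<sigma>'_def using False by simp
        qed
      qed
    qed
    then show ?thesis using congA congB by simp
  qed
  show ?case unfolding v_def[symmetric] w_def[symmetric] psat.simps
  proof
    assume h: "\<forall>a\<in>A. psat A rA (v(i := a)) q"
    show "\<forall>b\<in>B. psat B rB (w(i := b)) q"
    proof
      fix b assume b: "b \<in> B"
      obtain a where a: "a \<in> A" "Inv A rA B rB k' (insert (a,b) (set ps))" using step_back[OF eA eB inv b] by blast
      show "psat B rB (w(i := b)) q" using IH[OF a(2)] h a(1) by blast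
    qed
  next
    assume h: "\<forall>b\<in>B. psat B rB (w(i := b)) q"
    show "\<forall>a\<in>A. psat A rA (v(i := a)) q"
    proof
      fix a assume a: "a \<in> A"
      obtain b where b: "b \<in> B" "Inv A rA B rB k' (insert (a,b) (set ps))" using step[OF eA eB inv a] by blast
      show "psat A rA (v(i := a)) q" using IH[OF b(2)] h b(1) by blast
    qed
  qed
qed

lemma ef_sentence:
  assumes eA: "equiv A rA" and eB: "equiv B rB" and inv: "\<And>k. Inv A rA B rB k {}"
    and p: "psentence p" and ne: "A \<noteq> {}" "B \<noteq> {}"
  shows "pmodels A rA p \<longleftrightarrow> pmodels B rB p"
proof -
  have fv: "fvars p = {}" using p unfolding psentence_def .
  have e: "psat A rA (\<lambda>n. fst (([]::('a\<times>'b) list)!(id n))) p = psat B rB (\<lambda>n. snd (([]::('a\<times>'b) list)!(id n))) p"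
    by (rule ef[OF eA eB]) (use inv[of "qd p"] fv in auto)
  have cA: "psat A rA v p = psat A rA v' p" for v v' by (rule psat_cong) (simp add: fv)
  have cB: "psat B rB v p = psat B rB v' p" for v v' by (rule psat_cong) (simp add: fv)
  obtain a0 where a0: "a0 \<in> A" using ne by blast
  obtain b0 where b0: "b0 \<in> B" using ne by blast
  have "pmodels A rA p \<longleftrightarrow> psat A rA (\<lambda>n. a0) p"
  proof
    assume "pmodels A rA p" then show "psat A rA (\<lambda>n. a0) p" unfolding pmodels_def using a0 by (elim allE[of _ "\<lambda>n. a0"]) simp
  next
    assume h: "psat A rA (\<lambda>n. a0) p" show "pmodels A rA p" unfolding pmodels_def using cA[of _ "\<lambda>n. a0"] h by simp
  qed
  moreover have "pmodels B rB p \<longleftrightarrow> psat B rB (\<lambda>n. b0) p"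
  proof
    assume "pmodels B rB p" then show "psat B rB (\<lambda>n. b0) p" unfolding pmodels_def using b0 by (elim allE[of _ "\<lambda>n. b0"]) simp
  next
    assume h: "psat B rB (\<lambda>n. b0) p" show "pmodels B rB p" unfolding pmodels_def using cB[of _ "\<lambda>n. b0"] h by simp
  qed
  ultimately show ?thesis using e cA cB by metis
qed



definition sing :: "'a set \<Rightarrow> ('a \<times> 'a) set \<Rightarrow> 'a set" where
  "sing X r = {x \<in> X. r``{x} = {x}}"

lemma sing_infinite:
  assumes "in_C X r" shows "infinite (sing X r)"
proof
  assume fin: "finite (sing X r)"
  have e: "equiv X r" using assms unfolding in_C_def by simp
  have "{c \<in> X // r. card c = 1} \<subseteq> (\<lambda>x. {x}) ` sing X r"
  proof
    fix c assume "c \<in> {c \<in> X // r. card c = 1}"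
    then have c: "c \<in> X//r" "card c = 1" by simp_all
    obtain x where x: "c = {x}" using c(2) by (rule card_1_singletonE)
    have "c = r``{x}" using cls_mem[OF e c(1)] x by simp
    moreover have "x \<in> X" using in_quotient_imp_subset[OF e c(1)] x by simp
    ultimately have "x \<in> sing X r" unfolding sing_def using x by simp
    then show "c \<in> (\<lambda>x. {x}) ` sing X r" using x by simp
  qed
  then have "finite {c \<in> X // r. card c = 1}" using fin finite_subset by blast
  then show False using assms unfolding in_C_def by simp
qed

lemma ext_cond:
  assumes eX: "equiv X r" and eY: "equiv Y s" and cX: "countable X" and cY: "countable Y"
    and SX: "infinite (sing X r)"
    and Gi: "inj_on G (X - sing X r)" and GY: "G ` (X - sing X r) \<subseteq> Y"
    and Gr: "\<And>x x'. x \<in> X - sing X r \<Longrightarrow> x' \<in> X - sing X r \<Longrightarrow> (x,x') \<in> r \<Longrightarrow> (G x, G x') \<in> s"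
    and inf: "infinite (Y - G ` (X - sing X r))"
  shows "condenses X r Y s"
proof -
  define S where "S = sing X r"
  define N where "N = X - S"
  define T where "T = Y - G ` N"
  have cS: "countable S" using cX unfolding S_def sing_def by (rule countable_subset[rotated]) auto
  have cT: "countable T" using cY unfolding T_def by (rule countable_subset[rotated]) auto
  obtain e1 :: "'a \<Rightarrow> nat" where e1: "bij_betw e1 S UNIV" using countableE_infinite[OF cS] SX unfolding S_def by blast
  obtain e2 :: "'b \<Rightarrow> nat" where e2: "bij_betw e2 T UNIV" using countableE_infinite[OF cT] inf unfolding T_def N_def S_def by blast
  define H where "H = inv_into T e2 \<circ> e1"
  have H: "bij_betw H S T" unfolding H_def by (rule bij_betw_trans[OF e1 bij_betw_inv_into[OF e2]])
  define F where "F x = (if x \<in> S then H x else G x)" for x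
  have b1: "bij_betw F S T" using H by (subst bij_betw_cong[where g=H]) (auto simp: F_def)
  have b2: "bij_betw F N (G`N)" 
  proof -
    have "bij_betw G N (G`N)" using Gi unfolding N_def S_def by (simp add: bij_betw_imageI)
    then show ?thesis by (subst bij_betw_cong[where g=G]) (auto simp: F_def N_def)
  qed
  have "bij_betw F (S \<union> N) (T \<union> G`N)" by (rule bij_betw_combine[OF b1 b2]) (auto simp: T_def)
  moreover have "S \<union> N = X" unfolding N_def S_def sing_def by auto
  moreover have "T \<union> G`N = Y" unfolding T_def N_def S_def using GY by auto
  ultimately have bij: "bij_betw F X Y" by simp
  have rel: "(F x, F x') \<in> s" if x: "x \<in> X" "x' \<in> X" "(x,x') \<in> r" for x x'
  proof (cases "x \<in> S \<or> x' \<in> S")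
    case True
    then have "x = x'"
    proof
      assume "x \<in> S" then have h: "r``{x} = {x}" unfolding S_def sing_def by simp
      have "x' \<in> r``{x}" using x(3) by simp
      then show "x = x'" using h by simp
    next
      assume "x' \<in> S" then have h: "r``{x'} = {x'}" unfolding S_def sing_def by simp
      have "x \<in> r``{x'}" using eqv_sym[OF eX x(3)] by simp
      then show "x = x'" using h by simp
    qed
    moreover have "F x \<in> Y" using bij x(1) by (meson bij_betwE)
    ultimately show ?thesis using eqv_refl[OF eY] by simp
  next
    case False
    then have "x \<in> N" "x' \<in> N" using x unfolding N_def by auto
    then show ?thesis using Gr x(3) False unfolding F_def N_def S_def by simp
  qed
  show ?thesis unfolding condenses_def condensation_def using bij rel by blast
qed

lemma condA:
  assumes eX: "equiv X r" and cX: "countable X" and SX: "infinite (sing X r)"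
    and eY: "equiv Y s" and cY: "countable Y" and DY: "D \<subseteq> Y" and Dinf: "infinite D"
    and Ds: "D \<times> D \<subseteq> s" and YD: "infinite (Y - D)"
  shows "condenses X r Y s"
proof -
  define N where "N = X - sing X r"
  have cN: "countable N" using cX unfolding N_def by (rule countable_subset[rotated]) auto
  obtain f :: "'a \<Rightarrow> nat" where f: "inj_on f N" using cN by (rule countableE)
  have cD: "countable D" using cY DY by (rule countable_subset[rotated])
  obtain e :: "'b \<Rightarrow> nat" where e: "bij_betw e D UNIV" using countableE_infinite[OF cD Dinf] by blast
  have ie: "bij_betw (inv_into D e) UNIV D" by (rule bij_betw_inv_into[OF e])
  define G where "G = inv_into D e \<circ> f"
  have Gi: "inj_on G N" unfolding G_def
    by (rule comp_inj_on[OF f]) (use ie in \<open>auto simp: bij_betw_def intro: inj_on_subset\<close>)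
  have GD: "G ` N \<subseteq> D" unfolding G_def using ie by (auto simp: bij_betw_def)
  show ?thesis
  proof (rule ext_cond[OF eX eY cX cY SX])
    show "inj_on G (X - sing X r)" using Gi unfolding N_def .
    show "G ` (X - sing X r) \<subseteq> Y" using GD DY unfolding N_def by blast
    show "(G x, G x') \<in> s" if "x \<in> X - sing X r" "x' \<in> X - sing X r" "(x,x') \<in> r" for x x'
      using that GD Ds unfolding N_def by blast
    have "Y - D \<subseteq> Y - G ` (X - sing X r)" using GD unfolding N_def by blast
    then show "infinite (Y - G ` (X - sing X r))" using YD finite_subset by blast
  qed
qed



definition Zc :: "'a set \<Rightarrow> ('a + nat) set" where "Zc X = Inl ` X \<union> range Inr"
definition Zr :: "('a \<times> 'a) set \<Rightarrow> (('a + nat) \<times> ('a + nat)) set" where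
  "Zr r = {(Inl a, Inl b) | a b. (a,b) \<in> r} \<union> {(Inr i, Inr j) | i j. True}"

lemma Zr_mem[simp]: "(Inl a, Inl b) \<in> Zr r \<longleftrightarrow> (a,b) \<in> r" "(Inr i, Inr j) \<in> Zr r"
  "(Inl a, Inr j) \<notin> Zr r" "(Inr i, Inl b) \<notin> Zr r"
  by (auto simp: Zr_def)

lemma Zr_cases: "p \<in> Zr r \<Longrightarrow> (\<And>a b. p = (Inl a, Inl b) \<Longrightarrow> (a,b) \<in> r \<Longrightarrow> P) \<Longrightarrow> (\<And>i j. p = (Inr i, Inr j) \<Longrightarrow> P) \<Longrightarrow> P"
  by (auto simp: Zr_def)

lemma Z_equiv: assumes e: "equiv X r" shows "equiv (Zc X) (Zr r)"
proof (rule equivI)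
  show "Zr r \<subseteq> Zc X \<times> Zc X"
  proof
    fix p assume "p \<in> Zr r"
    then show "p \<in> Zc X \<times> Zc X"
    proof (rule Zr_cases)
      fix a b assume "p = (Inl a, Inl b)" "(a,b) \<in> r"
      then show ?thesis using eqv_type[OF e] unfolding Zc_def by auto
    next
      fix i j assume "p = (Inr i, Inr j)"
      then show ?thesis unfolding Zc_def by auto
    qed
  qed
  show "refl_on (Zc X) (Zr r)"
  proof (rule refl_onI)
    fix z assume "z \<in> Zc X"
    then show "(z,z) \<in> Zr r" unfolding Zc_def using eqv_refl[OF e] by auto
  qed
  show "sym (Zr r)"
  proof (rule symI)
    fix x y assume "(x,y) \<in> Zr r"
    then show "(y,x) \<in> Zr r" by (rule Zr_cases) (use eqv_sym[OF e] in auto)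
  qed
  show "trans (Zr r)"
  proof (rule transI)
    fix x y z assume h: "(x,y) \<in> Zr r" "(y,z) \<in> Zr r"
    show "(x,z) \<in> Zr r" using h(1)
    proof (rule Zr_cases)
      fix a b assume 1: "(x,y) = (Inl a, Inl b)" "(a,b) \<in> r"
      show ?thesis using h(2)
      proof (rule Zr_cases)
        fix a' b' assume "(y,z) = (Inl a', Inl b')" "(a',b') \<in> r"
        then show ?thesis using 1 eqv_trans[OF e] by auto
      next
        fix i j assume "(y,z) = (Inr i, Inr j)" then show ?thesis using 1 by auto
      qed
    next
      fix i j assume 1: "(x,y) = (Inr i, Inr j)"
      show ?thesis using h(2)
      proof (rule Zr_cases)
        fix a' b' assume "(y,z) = (Inl a', Inl b')" then show ?thesis using 1 by auto
      next
        fix i' j' assume "(y,z) = (Inr i', Inr j')" then show ?thesis using 1 by auto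
      qed
    qed
  qed
qed

lemma Z_img: "Zr r `` {Inl a} = Inl ` (r``{a})" "Zr r `` {Inr i} = range Inr"
  by (auto simp: Zr_def)

lemma Z_quot: "c \<in> Zc X // Zr r \<longleftrightarrow> (\<exists>c'\<in>X//r. c = Inl ` c') \<or> c = range Inr"
proof
  assume "c \<in> Zc X // Zr r"
  then obtain z where z: "z \<in> Zc X" "c = Zr r `` {z}" by (rule quotientE) simp
  show "(\<exists>c'\<in>X//r. c = Inl ` c') \<or> c = range Inr"
  proof (cases z)
    case (Inl a)
    then have "a \<in> X" using z(1) unfolding Zc_def by auto
    then have "r``{a} \<in> X//r" by (rule quotientI)
    moreover have "c = Inl ` (r``{a})" using z(2) Inl by (simp add: Z_img)
    ultimately show ?thesis by blast
  next
    case (Inr i)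
    then show ?thesis using z(2) by (simp add: Z_img)
  qed
next
  assume "(\<exists>c'\<in>X//r. c = Inl ` c') \<or> c = range Inr"
  then show "c \<in> Zc X // Zr r"
  proof
    assume "\<exists>c'\<in>X//r. c = Inl ` c'"
    then obtain c' where c': "c' \<in> X//r" "c = Inl ` c'" by blast
    then obtain a where a: "a \<in> X" "c' = r``{a}" by (auto elim: quotientE)
    then have "Inl a \<in> Zc X" unfolding Zc_def by simp
    then have "Zr r `` {Inl a} \<in> Zc X // Zr r" by (rule quotientI)
    then show ?thesis using c' a by (simp add: Z_img)
  next
    assume c: "c = range Inr"
    have "Inr 0 \<in> Zc X" unfolding Zc_def by simp
    then have "Zr r `` {Inr 0} \<in> Zc X // Zr r" by (rule quotientI)
    then show ?thesis using c by (simp add: Z_img)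
  qed
qed

lemma inf_Inr: "infinite (range (Inr :: nat \<Rightarrow> 'a + nat))"
  using range_inj_infinite[of "Inr :: nat \<Rightarrow> 'a + nat"] by (simp add: inj_def)

lemma Inl_img_neq: "Inl ` c \<noteq> range Inr"
  by auto

lemma Ecl_Z: "Ecl (Zc X) (Zr r) {} s = image Inl ` Ecl X r {} s"
proof (rule set_eqI)
  fix c :: "('a + nat) set"
  have fi: "finite (Inl ` c') = finite c'" for c' :: "'a set" by (rule finite_image_iff) (simp add: inj_on_def)
  have ca: "card (Inl ` c') = card c'" for c' :: "'a set" by (rule card_image) (simp add: inj_on_def)
  show "c \<in> Ecl (Zc X) (Zr r) {} s \<longleftrightarrow> c \<in> image Inl ` Ecl X r {} s"
  proof
    assume "c \<in> Ecl (Zc X) (Zr r) {} s"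
    then have q: "c \<in> Zc X // Zr r" "finite c" "card c = s" unfolding Ecl_def by auto
    from q(1) have "(\<exists>c'\<in>X//r. c = Inl ` c') \<or> c = range Inr" unfolding Z_quot .
    then obtain c' where c': "c' \<in> X//r" "c = Inl ` c'" using q(2) inf_Inr by blast
    then have "c' \<in> Ecl X r {} s" unfolding Ecl_def using q by (auto simp: fi ca)
    then show "c \<in> image Inl ` Ecl X r {} s" using c'(2) by (rule rev_image_eqI)
  next
    assume "c \<in> image Inl ` Ecl X r {} s"
    then obtain c' where c': "c' \<in> Ecl X r {} s" "c = Inl ` c'" by blast
    then have "c \<in> Zc X // Zr r" unfolding Z_quot Ecl_def by blast
    then show "c \<in> Ecl (Zc X) (Zr r) {} s" using c' unfolding Ecl_def by (auto simp: fi ca)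
  qed
qed

lemma Gcl_Z: "Gcl (Zc X) (Zr r) {} s = image Inl ` Gcl X r {} s \<union> {range Inr}"
proof (rule set_eqI)
  fix c :: "('a + nat) set"
  have gi: "ge s (Inl ` c') = ge s c'" for c' :: "'a set" by (rule ge_image) (simp add: inj_on_def)
  have gr: "ge s (range (Inr :: nat \<Rightarrow> 'a + nat))" by (rule ge_inf[OF inf_Inr])
  show "c \<in> Gcl (Zc X) (Zr r) {} s \<longleftrightarrow> c \<in> image Inl ` Gcl X r {} s \<union> {range Inr}"
  proof
    assume "c \<in> Gcl (Zc X) (Zr r) {} s"
    then have q: "c \<in> Zc X // Zr r" "ge s c" unfolding Gcl_def by auto
    from q(1) have "(\<exists>c'\<in>X//r. c = Inl ` c') \<or> c = range Inr" unfolding Z_quot .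
    then show "c \<in> image Inl ` Gcl X r {} s \<union> {range Inr}"
    proof
      assume "\<exists>c'\<in>X//r. c = Inl ` c'"
      then obtain c' where c': "c' \<in> X//r" "c = Inl ` c'" by blast
      then have "c' \<in> Gcl X r {} s" unfolding Gcl_def using q by (auto simp: gi)
      then have "c \<in> image Inl ` Gcl X r {} s" using c'(2) by (rule rev_image_eqI)
      then show ?thesis by simp
    qed simp
  next
    assume "c \<in> image Inl ` Gcl X r {} s \<union> {range Inr}"
    then show "c \<in> Gcl (Zc X) (Zr r) {} s"
    proof
      assume "c \<in> image Inl ` Gcl X r {} s"
      then obtain c' where c': "c' \<in> Gcl X r {} s" "c = Inl ` c'" by blast
      then have "c \<in> Zc X // Zr r" unfolding Z_quot Gcl_def by blast
      then show "c \<in> Gcl (Zc X) (Zr r) {} s" using c' unfolding Gcl_def by (auto simp: gi)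
    next
      assume "c \<in> {range Inr}"
      then have c: "c = range Inr" by simp
      then have "c \<in> Zc X // Zr r" unfolding Z_quot by blast
      then show "c \<in> Gcl (Zc X) (Zr r) {} s" using c gr unfolding Gcl_def by auto
    qed
  qed
qed

lemma Gcl_inf:
  assumes "in_C_fin X r" shows "infinite (Gcl X r {} s)"
proof
  assume fin: "finite (Gcl X r {} s)"
  have fc: "\<And>c. c \<in> X//r \<Longrightarrow> finite c" using assms unfolding in_C_fin_def by blast
  have big: "\<And>n. \<exists>c\<in>X//r. infinite c \<or> n \<le> card c" using assms unfolding in_C_fin_def in_C_def by blast
  define M where "M = Max (insert 0 (card ` Gcl X r {} s))"
  obtain c where c: "c \<in> X//r" "infinite c \<or> max s (Suc M) \<le> card c" using big by blast
  then have c2: "max s (Suc M) \<le> card c" using fc by blast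
  then have "ge s c" unfolding ge_def by simp
  then have "c \<in> Gcl X r {} s" unfolding Gcl_def using c(1) by simp
  then have "card c \<le> M" unfolding M_def using fin by (intro Max_ge) auto
  then show False using c2 by simp
qed

lemma inj_imgInl: "inj_on (image Inl) S"
  by (rule inj_onI) (simp add: inj_image_eq_iff inj_def)

lemma Inv_Z:
  assumes "in_C_fin X r" shows "Inv (Zc X) (Zr r) X r k {}"
proof (rule InvI)
  fix s n
  show "ge n (Ecl (Zc X) (Zr r) (fst`{}) s) = ge n (Ecl X r (snd`{}) s)"
    unfolding image_empty Ecl_Z by (rule ge_image[OF inj_imgInl])
next
  fix s n
  have "infinite (Gcl X r {} s)" by (rule Gcl_inf[OF assms])
  then have "infinite (image Inl ` Gcl X r {} s)" using finite_image_iff[OF inj_imgInl] by blast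
  then have "infinite (Gcl (Zc X) (Zr r) {} s)" unfolding Gcl_Z by simp
  then show "ge n (Gcl (Zc X) (Zr r) (fst`{}) s) = ge n (Gcl X r (snd`{}) s)"
    unfolding image_empty using ge_inf[OF \<open>infinite (Gcl X r {} s)\<close>, of n]
      ge_inf[OF \<open>infinite (Gcl (Zc X) (Zr r) {} s)\<close>, of n] by simp
qed auto

lemma key:
  assumes X: "in_C_fin X r" and Y: "in_C_omega Y s" and p: "psentence p" and m: "pmodels Y s p"
  shows "pmodels X r p"
proof -
  have XC: "in_C X r" and YC: "in_C Y s" using X Y unfolding in_C_fin_def in_C_omega_def by auto
  have eX: "equiv X r" and cX: "countable X" and iX: "infinite X" using XC unfolding in_C_def by auto
  have eY: "equiv Y s" and cY: "countable Y" using YC unfolding in_C_def by auto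
  have eZ: "equiv (Zc X) (Zr r)" by (rule Z_equiv[OF eX])
  have cZ: "countable (Zc X)" unfolding Zc_def using cX by simp
  have DZ: "range Inr \<subseteq> Zc X" unfolding Zc_def by auto
  have Ds: "range Inr \<times> range Inr \<subseteq> Zr r" by auto
  have "Zc X - range Inr = Inl ` X" unfolding Zc_def by auto
  moreover have "infinite (Inl ` X)" using iX finite_imageD[of Inl X] by (auto simp: inj_on_def)
  ultimately have ZD: "infinite (Zc X - range Inr)" by simp
  have "condenses Y s (Zc X) (Zr r)"
    by (rule condA[OF eY cY sing_infinite[OF YC] eZ cZ DZ inf_Inr Ds ZD])
  then have mZ: "pmodels (Zc X) (Zr r) p" using m by (rule pmodels_condenses)
  have neZ: "Zc X \<noteq> {}" unfolding Zc_def by auto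
  have neX: "X \<noteq> {}" using iX by auto
  show ?thesis using ef_sentence[OF eZ eX Inv_Z[OF X] p neZ neX] mZ by simp
qed



lemma quot_img: "X//r = (\<lambda>x. r``{x}) ` X"
  unfolding quotient_def by auto

lemma card_ge2:
  assumes e: "equiv X r" and x: "x \<in> X" and ns: "r``{x} \<noteq> {x}" and f: "finite (r``{x})"
  shows "2 \<le> card (r``{x})"
proof (rule ccontr)
  assume "\<not> 2 \<le> card (r``{x})"
  moreover have xin: "x \<in> r``{x}" using equiv_class_self[OF e x] .
  then have "card (r``{x}) \<noteq> 0" using f by auto
  ultimately have "card (r``{x}) = 1" by simp
  then obtain z where z: "r``{x} = {z}" by (rule card_1_singletonE)
  then show False using xin ns by simp
qed

lemma condB:
  assumes X: "in_C_fin X r" and Y: "in_C_fin Y s"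
  shows "condenses X r Y s"
proof -
  have XC: "in_C X r" and YC: "in_C Y s" using X Y unfolding in_C_fin_def by auto
  have eX: "equiv X r" and cX: "countable X" using XC unfolding in_C_def by auto
  have eY: "equiv Y s" and cY: "countable Y" using YC unfolding in_C_def by auto
  have fX: "\<And>c. c \<in> X//r \<Longrightarrow> finite c" using X unfolding in_C_fin_def by blast
  have fY: "\<And>c. c \<in> Y//s \<Longrightarrow> finite c" using Y unfolding in_C_fin_def by blast
  have bigY: "\<exists>d\<in>Y//s. n \<le> card d" for n
  proof -
    obtain d where "d \<in> Y//s" "infinite d \<or> n \<le> card d" using YC unfolding in_C_def by blast
    then show ?thesis using fY by blast
  qed
  define T where "T = card ` (Y//s)"
  have infT: "infinite T" unfolding infinite_nat_iff_unbounded_le T_def using bigY by blast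
  define t where "t = enumerate T"
  have tT: "t j \<in> T" for j unfolding t_def using infT by (rule enumerate_in_set)
  have tge: "j \<le> t j" for j unfolding t_def using infT by (rule le_enumerate)
  have tinj: "inj t" unfolding t_def using strict_mono_enumerate[OF infT] by (rule strict_mono_imp_inj_on)
  define dd where "dd j = (SOME d. d \<in> Y//s \<and> card d = t j)" for j
  have dd: "dd j \<in> Y//s \<and> card (dd j) = t j" for j
  proof -
    have "\<exists>d. d \<in> Y//s \<and> card d = t j" using tT[of j] unfolding T_def by force
    then show ?thesis unfolding dd_def by (rule someI_ex)
  qed
  have ddinj: "inj dd"
  proof (rule injI)
    fix i j assume "dd i = dd j"
    then have "t i = t j" using dd[of i] dd[of j] by simp
    then show "i = j" using tinj by (simp add: inj_def)
  qed
  have cQ: "countable (X//r)" unfolding quot_img using cX by simp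
  obtain ix :: "'a set \<Rightarrow> nat" where ix: "inj_on ix (X//r)" using cQ by (rule countableE)
  define m where "m c = prod_encode (ix c, card c)" for c
  have minj: "inj_on m (X//r)"
  proof (rule inj_onI)
    fix c c' assume c: "c \<in> X//r" "c' \<in> X//r" "m c = m c'"
    then have "ix c = ix c'" unfolding m_def by (simp add: prod_encode_eq)
    then show "c = c'" using ix c by (simp add: inj_on_def)
  qed
  define D where "D c = dd (m c)" for c
  have DQ: "D c \<in> Y//s" for c unfolding D_def using dd by blast
  have Dcard: "card c \<le> card (D c)" for c
  proof -
    have "card c \<le> m c" unfolding m_def by (rule le_prod_encode_2)
    also have "m c \<le> t (m c)" by (rule tge)
    also have "t (m c) = card (D c)" unfolding D_def using dd by simp
    finally show ?thesis .
  qed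
  have Dinj: "inj_on D (X//r)" unfolding D_def
    using minj ddinj by (simp add: inj_on_def inj_def)
  define h where "h c = (SOME f. f ` c \<subseteq> D c \<and> inj_on f c)" for c
  have h: "h c ` c \<subseteq> D c \<and> inj_on (h c) c" if "c \<in> X//r" for c
  proof -
    have "\<exists>f. f ` c \<subseteq> D c \<and> inj_on f c"
      by (rule card_le_inj[OF fX[OF that] fY[OF DQ] Dcard])
    then show ?thesis unfolding h_def by (rule someI_ex)
  qed
  define G where "G x = h (r``{x}) x" for x
  have GD: "G x \<in> D (r``{x})" if "x \<in> X" for x
  proof -
    have "r``{x} \<in> X//r" using that by (rule quotientI)
    moreover have "x \<in> r``{x}" using equiv_class_self[OF eX that] .
    ultimately show ?thesis unfolding G_def using h by blast
  qed
  show ?thesis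
  proof (rule ext_cond[OF eX eY cX cY sing_infinite[OF XC]])
    show "inj_on G (X - sing X r)"
    proof (rule inj_onI)
      fix x x' assume xx: "x \<in> X - sing X r" "x' \<in> X - sing X r" "G x = G x'"
      have q: "r``{x} \<in> X//r" "r``{x'} \<in> X//r" using xx by (auto intro: quotientI)
      have ceq: "r``{x} = r``{x'}"
      proof (rule ccontr)
        assume "r``{x} \<noteq> r``{x'}"
        then have "D (r``{x}) \<noteq> D (r``{x'})" using Dinj q by (auto simp: inj_on_def)
        then have "D (r``{x}) \<inter> D (r``{x'}) = {}" using quotient_disj[OF eY DQ DQ] by blast
        moreover have "G x \<in> D (r``{x})" using GD xx(1) by simp
        moreover have "G x \<in> D (r``{x'})" using GD[of x'] xx(2,3) by simp
        ultimately show False by blast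
      qed
      have "inj_on (h (r``{x})) (r``{x})" using h q(1) by blast
      moreover have "x \<in> r``{x}" "x' \<in> r``{x}" using equiv_class_self[OF eX] xx ceq by auto
      moreover have "h (r``{x}) x = h (r``{x}) x'" using xx(3) ceq unfolding G_def by simp
      ultimately show "x = x'" by (simp add: inj_on_def)
    qed
    show "G ` (X - sing X r) \<subseteq> Y"
      using GD in_quotient_imp_subset[OF eY DQ] by blast
    show "(G x, G x') \<in> s" if "x \<in> X - sing X r" "x' \<in> X - sing X r" "(x,x') \<in> r" for x x'
    proof -
      have ceq: "r``{x} = r``{x'}" using equiv_class_eq[OF eX that(3)] .
      have g1: "G x \<in> D (r``{x})" using GD that(1) by simp
      have g2: "G x' \<in> D (r``{x})" using GD[of x'] that(2) ceq by simp
      note g = g1 g2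
      have "D (r``{x}) = s``{G x}" using cls_mem[OF eY DQ g(1)] .
      then show ?thesis using g(2) by simp
    qed
    have "sing Y s \<subseteq> Y - G ` (X - sing X r)"
    proof
      fix y assume y: "y \<in> sing Y s"
      have "y \<notin> G ` (X - sing X r)"
      proof
        assume "y \<in> G ` (X - sing X r)"
        then obtain x where x: "x \<in> X" "x \<notin> sing X r" "y = G x" by blast
        have ns: "r``{x} \<noteq> {x}" using x unfolding sing_def by simp
        have fin: "finite (r``{x})" using fX[OF quotientI[OF x(1)]] .
        have "2 \<le> card (r``{x})" by (rule card_ge2[OF eX x(1) ns fin])
        also have "\<dots> \<le> card (D (r``{x}))" by (rule Dcard)
        also have "D (r``{x}) = s``{y}" using cls_mem[OF eY DQ] GD[OF x(1)] x(3) by blast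
        also have "s``{y} = {y}" using y unfolding sing_def by simp
        finally show False by simp
      qed
      then show "y \<in> Y - G ` (X - sing X r)" using y unfolding sing_def by simp
    qed
    then show "infinite (Y - G ` (X - sing X r))" using sing_infinite[OF YC] finite_subset by blast
  qed
qed

lemma omega_iff: "in_C X r \<Longrightarrow> in_C_omega X r \<longleftrightarrow> (\<exists>c\<in>X//r. infinite c)"
  unfolding in_C_omega_def in_C_fin_def by blast

lemma omega_cond:
  assumes c: "condenses X r Y s" and YC: "in_C Y s" and Xo: "in_C_omega X r"
  shows "in_C_omega Y s"
proof -
  have XC: "in_C X r" using Xo unfolding in_C_omega_def by simp
  have eX: "equiv X r" using XC unfolding in_C_def by simp
  have eY: "equiv Y s" using YC unfolding in_C_def by simp
  obtain c0 where c0: "c0 \<in> X//r" "infinite c0" using Xo omega_iff[OF XC] by blast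
  obtain x where x: "x \<in> X" "c0 = r``{x}" using c0(1) by (auto elim: quotientE)
  obtain F where F: "condensation F X r Y s" using c unfolding condenses_def by blast
  have bij: "bij_betw F X Y" using F unfolding condensation_def by simp
  have sub: "F ` c0 \<subseteq> s``{F x}"
  proof
    fix z assume "z \<in> F ` c0"
    then obtain x' where x': "x' \<in> c0" "z = F x'" by blast
    have "(x,x') \<in> r" using x' x by simp
    moreover have "x' \<in> X" using eqv_type[OF eX \<open>(x,x') \<in> r\<close>] by simp
    ultimately have "(F x, F x') \<in> s" using F x(1) unfolding condensation_def by blast
    then show "z \<in> s``{F x}" using x' by simp
  qed
  have "c0 \<subseteq> X" using in_quotient_imp_subset[OF eX c0(1)] .
  then have "inj_on F c0" using bij unfolding bij_betw_def by (auto intro: inj_on_subset)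
  then have "infinite (F ` c0)" using c0(2) finite_imageD by blast
  then have "infinite (s``{F x})" using sub finite_subset by blast
  moreover have "F x \<in> Y" using bij x(1) by (meson bij_betwE)
  then have "s``{F x} \<in> Y//s" by (rule quotientI)
  ultimately show ?thesis using omega_iff[OF YC] by blast
qed

lemma cond_to_omega:
  assumes XC: "in_C X r" and Yo: "in_C_omega Y s"
  shows "condenses X r Y s"
proof -
  have YC: "in_C Y s" using Yo unfolding in_C_omega_def by simp
  have eX: "equiv X r" and cX: "countable X" using XC unfolding in_C_def by auto
  have eY: "equiv Y s" and cY: "countable Y" using YC unfolding in_C_def by auto
  obtain D where D: "D \<in> Y//s" "infinite D" using Yo omega_iff[OF YC] by blast
  obtain y where y: "y \<in> Y" "D = s``{y}" using D(1) by (auto elim: quotientE)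
  have DY: "D \<subseteq> Y" using in_quotient_imp_subset[OF eY D(1)] .
  have Ds: "D \<times> D \<subseteq> s"
  proof
    fix p assume "p \<in> D \<times> D"
    then obtain u v where p: "p = (u,v)" "(y,u) \<in> s" "(y,v) \<in> s" using y by auto
    have "(u,y) \<in> s" using eqv_sym[OF eY p(2)] .
    then have "(u,v) \<in> s" using eqv_trans[OF eY _ p(3)] by blast
    then show "p \<in> s" using p by simp
  qed
  have "sing Y s \<subseteq> Y - D"
  proof
    fix z assume z: "z \<in> sing Y s"
    have "z \<notin> D"
    proof
      assume "z \<in> D"
      then have "D = s``{z}" using cls_mem[OF eY D(1)] by blast
      then have "D = {z}" using z unfolding sing_def by simp
      then show False using D(2) by simp
    qed
    then show "z \<in> Y - D" using z unfolding sing_def by simp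
  qed
  then have "infinite (Y - D)" using sing_infinite[OF YC] finite_subset by blast
  then show ?thesis by (rule condA[OF eX cX sing_infinite[OF XC] eY cY DY D(2) Ds])
qed

lemma cond_iff:
  assumes XC: "in_C X r" and YC: "in_C Y s"
  shows "condenses X r Y s \<longleftrightarrow> in_C_fin X r \<or> in_C_omega Y s"
proof
  assume c: "condenses X r Y s"
  show "in_C_fin X r \<or> in_C_omega Y s"
  proof (cases "in_C_fin X r")
    case False
    then have "in_C_omega X r" using XC unfolding in_C_omega_def by simp
    then show ?thesis using omega_cond[OF c YC] by simp
  qed simp
next
  assume h: "in_C_fin X r \<or> in_C_omega Y s"
  show "condenses X r Y s"
  proof (cases "in_C_omega Y s")
    case True then show ?thesis by (rule cond_to_omega[OF XC])
  next
    case False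
    then have "in_C_fin Y s" using YC unfolding in_C_omega_def by simp
    moreover have "in_C_fin X r" using h False by simp
    ultimately show ?thesis using condB by blast
  qed
qed



theorem claim6p1:
  fixes X :: "'a set" and r :: "('a \<times> 'a) set"
    and Y :: "'b set" and s :: "('b \<times> 'b) set"
  assumes "in_C X r" and "in_C Y s"
  shows "P_equiv X r Y s
    \<and> (condenses X r Y s \<longleftrightarrow> in_C_fin X r \<or> in_C_omega Y s)
    \<and> (bi_condensable X r Y s \<longleftrightarrow>
          (in_C_fin X r \<and> in_C_fin Y s) \<or> (in_C_omega X r \<and> in_C_omega Y s))"
proof -
  have ox: "in_C_omega X r \<longleftrightarrow> \<not> in_C_fin X r" using assms(1) unfolding in_C_omega_def by simp
  have oy: "in_C_omega Y s \<longleftrightarrow> \<not> in_C_fin Y s" using assms(2) unfolding in_C_omega_def by simp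
  have c1: "condenses X r Y s \<longleftrightarrow> in_C_fin X r \<or> in_C_omega Y s" by (rule cond_iff[OF assms])
  have c2: "condenses Y s X r \<longleftrightarrow> in_C_fin Y s \<or> in_C_omega X r" by (rule cond_iff[OF assms(2,1)])
  have bi: "bi_condensable X r Y s \<longleftrightarrow>
          (in_C_fin X r \<and> in_C_fin Y s) \<or> (in_C_omega X r \<and> in_C_omega Y s)"
    unfolding bi_condensable_def c1 c2 using ox oy by blast
  have pe: "P_equiv X r Y s"
    unfolding P_equiv_def
  proof (intro allI impI)
    fix p assume p: "psentence p"
    show "pmodels X r p \<longleftrightarrow> pmodels Y s p"
    proof
      assume m: "pmodels X r p"
      show "pmodels Y s p"
      proof (cases "condenses X r Y s")
        case True then show ?thesis using m by (rule pmodels_condenses)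
      next
        case False
        then have "in_C_omega X r" "in_C_fin Y s" using c1 ox oy by auto
        then show ?thesis using key p m by blast
      qed
    next
      assume m: "pmodels Y s p"
      show "pmodels X r p"
      proof (cases "condenses Y s X r")
        case True then show ?thesis using m by (rule pmodels_condenses)
      next
        case False
        then have "in_C_omega Y s" "in_C_fin X r" using c2 ox oy by auto
        then show ?thesis using key p m by blast
      qed
    qed
  qed
  show ?thesis using pe c1 bi by blast
qed

end
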